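(* Let $\Phi_D$ be a set of BS indices containing $0$, $\Psi_D=\Phi_D\setminus\{0\}$, $K\ge1$, $\tau_c>0$, $B_W>0$, and positive $p_{l'i},q_{l'i},\beta_{0l'i}$ ($l'\in\Phi_D$, $i=1,\dots,K$), with $k$ fixed, and define $$\mathrm{SIR}_{rp}=\frac{p_{0k}\beta_{00k}}{\frac1{\tau_c}\sum_{l'\in\Psi_D}\sum_{i=1}^K\frac{p_{l'i}q_{l'i}}{q_{0k}}\frac{\beta_{0l'i}^2}{\beta_{00k}}}.$$ The asymptotic ($M\to\infty$) regular-pilot rate $R^{a\text{-}rp}_{0k}=(1-\frac{\tau_p}{\tau_c})B_W\log_2\big(1+\frac{p_{0k}\beta_{00k}}{\frac1{\tau_p}\sum_{l'\in\Psi_D}\sum_{i=1}^K\frac{p_{l'i}q_{l'i}}{q_{0k}}\frac{\beta_{0l'i}^2}{\beta_{00k}}}\big)$, written as a function of $\zeta=\tau_p/\tau_c\in[0,1]$, is $f(\zeta)=B_W(1-\zeta)\log_2(1+\zeta\,\mathrm{SIR}_{rp})$. If $\mathrm{SIR}_{rp}>0$, then $f$ is concave on $[0,1]$ and its maximum over $[0,1]$ is attained at $$\zeta^{\max}=\frac{1}{\mathrm{SIR}_{rp}}\Big(\frac{1+\mathrm{SIR}_{rp}}{W\big((1+\mathrm{SIR}_{rp})e\big)}-1\Big)\in(0,1),$$ where $W$ is the Lambert $W$ function and $e$ is the base of the natural logarithm.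
   Context: The Lambert $W$ function is defined by $z=W(z)e^{W(z)}$ (principal branch for positive arguments). $\tau_p$ is the regular-pilot length, $\tau_c$ the coherence block length, $p_{l'i},q_{l'i}$ data and pilot powers of user $i$ in cell $l'$, $\beta_{0l'i}$ its large-scale fading coefficient to BS $0$. *)

theory Defs
  imports "HOL-Analysis.Analysis"
begin

text \<open>Principal branch of the Lambert W function on positive reals:
  for z > 0, W z is the unique w > 0 with w * exp w = z.\<close>
definition lambertW :: "real \<Rightarrow> real" where
  "lambertW z = (THE w. w > 0 \<and> w * exp w = z)"

text \<open>Interference term: sum over l' in Psi_D = Phi_D - {0}, i = 1..K of
  (p l' i * q l' i / q 0 k) * (beta l' i ^ 2 / beta 0 k), where beta l i
  stands for beta_{0 l i}.\<close>
definition interf ::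
  "nat set \<Rightarrow> nat \<Rightarrow> (nat \<Rightarrow> nat \<Rightarrow> real) \<Rightarrow> (nat \<Rightarrow> nat \<Rightarrow> real) \<Rightarrow> (nat \<Rightarrow> nat \<Rightarrow> real) \<Rightarrow> nat \<Rightarrow> real"
  where "interf PhiD K p q beta k =
    (\<Sum>l'\<in>PhiD - {0}. \<Sum>i=1..K. (p l' i * q l' i / q 0 k) * (beta l' i ^ 2 / beta 0 k))"

definition SIR_rp ::
  "nat set \<Rightarrow> nat \<Rightarrow> real \<Rightarrow> (nat \<Rightarrow> nat \<Rightarrow> real) \<Rightarrow> (nat \<Rightarrow> nat \<Rightarrow> real) \<Rightarrow> (nat \<Rightarrow> nat \<Rightarrow> real) \<Rightarrow> nat \<Rightarrow> real"
  where "SIR_rp PhiD K tau_c p q beta k =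
    p 0 k * beta 0 k / ((1 / tau_c) * interf PhiD K p q beta k)"

definition rate_arp ::
  "nat set \<Rightarrow> nat \<Rightarrow> real \<Rightarrow> real \<Rightarrow> (nat \<Rightarrow> nat \<Rightarrow> real) \<Rightarrow> (nat \<Rightarrow> nat \<Rightarrow> real) \<Rightarrow> (nat \<Rightarrow> nat \<Rightarrow> real) \<Rightarrow> nat \<Rightarrow> real \<Rightarrow> real"
  where "rate_arp PhiD K tau_c B_W p q beta k tau_p =
    (1 - tau_p / tau_c) * B_W *
      log 2 (1 + p 0 k * beta 0 k / ((1 / tau_p) * interf PhiD K p q beta k))"

end

theory Submission
  imports Defs
begin

lemma d1:
  fixes c S x :: real assumes px: "1 + x * S > 0"
  shows "DERIV (\<lambda>x. - (c * ((1 - x) * ln (1 + x * S)))) x :> c * (ln (1 + x * S) - (1 - x) * S / (1 + x * S))"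
  using px apply -
  apply (rule derivative_eq_intros refl | (simp; fail))+
  apply (simp add: field_simps)
  done
lemma d2:
  fixes c S x :: real assumes px: "1 + x * S > 0"
  shows "DERIV (\<lambda>x. c * (ln (1 + x * S) - (1 - x) * S / (1 + x * S))) x :> c * (S / (1 + x * S) + S * (1 + S) / (1 + x * S)^2)"
  using px apply -
  apply (rule derivative_eq_intros refl | (simp; fail))+
  apply (simp add: field_simps power2_eq_square)
  apply (simp only: add_divide_distrib[symmetric])
  apply simp
  done

lemma xexp_strict_mono:
  fixes a b :: real
  assumes "0 < a" "a < b"
  shows "a * exp a < b * exp b"
proof -
  have "exp a < exp b" using assms by simp
  then show ?thesis using assms by (intro mult_strict_mono) auto
qed

lemma lambertW_char:
  fixes S :: real
  assumes S: "S > 0"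
  shows "lambertW ((1 + S) * exp 1) > 1 \<and> lambertW ((1 + S) * exp 1) < 1 + S
    \<and> lambertW ((1 + S) * exp 1) * exp (lambertW ((1 + S) * exp 1)) = (1 + S) * exp 1"
proof -
  let ?z = "(1 + S) * exp 1"
  have c: "continuous_on {1..1+S} (\<lambda>w::real. w * exp w)"
    by (intro continuous_intros)
  have "1 * exp 1 \<le> ?z" using S by simp
  moreover have "?z \<le> (1+S) * exp (1+S)" using S by simp
  ultimately obtain w where w: "1 \<le> w" "w \<le> 1 + S" "w * exp w = ?z"
    using IVT'[of "\<lambda>w. w * exp w" 1 ?z "1+S"] c S by auto
  have uniq: "\<And>v. v > 0 \<and> v * exp v = ?z \<Longrightarrow> v = w"
  proof -
    fix v assume v: "v > 0 \<and> v * exp v = ?z"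
    show "v = w"
    proof (rule ccontr)
      assume "v \<noteq> w"
      then consider "v < w" | "w < v" by linarith
      then show False
        using xexp_strict_mono[of v w] xexp_strict_mono[of w v] v w by auto
    qed
  qed
  have wpos: "w > 0" using w by simp
  have L: "lambertW ?z = w"
    unfolding lambertW_def
    by (rule the_equality) (use wpos w uniq in auto)
  have "w \<noteq> 1" using w S by auto
  moreover have "w \<noteq> 1 + S" using w S by auto
  ultimately show ?thesis using L w by auto
qed

theorem corollary3:
  fixes PhiD :: "nat set" and K k :: nat and tau_c B_W :: real
    and p q beta :: "nat \<Rightarrow> nat \<Rightarrow> real"
  assumes "finite PhiD" and "0 \<in> PhiD" and "K \<ge> 1" and "1 \<le> k" and "k \<le> K"
    and "tau_c > 0" and "B_W > 0"
    and "\<And>l i. l \<in> PhiD \<Longrightarrow> 1 \<le> i \<Longrightarrow> i \<le> K \<Longrightarrow> p l i > 0"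
    and "\<And>l i. l \<in> PhiD \<Longrightarrow> 1 \<le> i \<Longrightarrow> i \<le> K \<Longrightarrow> q l i > 0"
    and "\<And>l i. l \<in> PhiD \<Longrightarrow> 1 \<le> i \<Longrightarrow> i \<le> K \<Longrightarrow> beta l i > 0"
    and "SIR_rp PhiD K tau_c p q beta k > 0"
  shows "let S = SIR_rp PhiD K tau_c p q beta k;
             f = (\<lambda>\<zeta>::real. B_W * (1 - \<zeta>) * log 2 (1 + \<zeta> * S));
             \<zeta>max = (1 / S) * ((1 + S) / lambertW ((1 + S) * exp 1) - 1)
         in (\<forall>tau_p. 0 < tau_p \<and> tau_p \<le> tau_c \<longrightarrow>
                rate_arp PhiD K tau_c B_W p q beta k tau_p = f (tau_p / tau_c))
          \<and> concave_on {0..1} f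
          \<and> \<zeta>max \<in> {0<..<1}
          \<and> (\<forall>\<zeta>\<in>{0..1}. f \<zeta> \<le> f \<zeta>max)"
proof -
  define S where "S = SIR_rp PhiD K tau_c p q beta k"
  define I where "I = interf PhiD K p q beta k"
  define f where "f = (\<lambda>\<zeta>::real. B_W * (1 - \<zeta>) * log 2 (1 + \<zeta> * S))"
  define W where "W = lambertW ((1 + S) * exp 1)"
  define zm where "zm = (1 / S) * ((1 + S) / W - 1)"
  have Spos: "S > 0" using assms(11) S_def by simp
  have pb: "p 0 k * beta 0 k > 0" using assms by simp
  have S_eq: "S = p 0 k * beta 0 k * tau_c / I"
    unfolding S_def I_def SIR_rp_def by (simp add: field_simps)
  have Ipos: "I > 0"
  proof -
    have "I \<noteq> 0" using Spos S_eq by auto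
    moreover have "\<not> I < 0"
    proof
      assume "I < 0"
      moreover have "p 0 k * beta 0 k * tau_c > 0" using pb assms(6) by simp
      ultimately have "S < 0" unfolding S_eq by (simp add: divide_pos_neg)
      then show False using Spos by simp
    qed
    ultimately show ?thesis by linarith
  qed
  have P1: "\<forall>tau_p. 0 < tau_p \<and> tau_p \<le> tau_c \<longrightarrow>
                rate_arp PhiD K tau_c B_W p q beta k tau_p = f (tau_p / tau_c)"
  proof (intro allI impI)
    fix tp :: real assume tp: "0 < tp \<and> tp \<le> tau_c"
    have "p 0 k * beta 0 k / ((1 / tp) * I) = tp / tau_c * S"
      using tp assms(6) Ipos S_eq by (simp add: field_simps)
    then show "rate_arp PhiD K tau_c B_W p q beta k tp = f (tp / tau_c)"
      unfolding rate_arp_def f_def I_def[symmetric] by simp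
  qed
  have Wc: "W > 1" "W < 1 + S" "W * exp W = (1 + S) * exp 1"
    using lambertW_char[OF Spos] W_def by auto
  define um where "um = (1 + S) / W"
  have um1: "um > 1" using Wc Spos unfolding um_def by (simp add: field_simps)
  have um2: "um < 1 + S"
  proof -
    have "1 + S < W * (1 + S)" using Wc Spos by (intro mult_strict_right_mono[of 1 W, simplified]) auto
    then show ?thesis using Wc Spos unfolding um_def by (simp add: field_simps)
  qed
  have zm_um: "1 + zm * S = um" unfolding zm_def um_def using Spos Wc by (simp add: field_simps)
  have P3: "zm \<in> {0<..<1}"
  proof -
    have a: "zm * S > 0" using zm_um um1 by simp
    have b: "zm * S < 1 * S" using zm_um um2 by simp
    have "zm > 0" using a Spos by (simp add: zero_less_mult_iff)
    moreover have "zm < 1" using b Spos by (simp only: mult_less_cancel_right)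
    ultimately show ?thesis by simp
  qed
  have lnum: "ln um = (1 + S) / um - 1"
  proof -
    have "ln W + W = ln (1 + S) + 1"
    proof -
      have "ln (W * exp W) = ln ((1 + S) * exp 1)" by (simp only: Wc(3))
      moreover have "ln (W * exp W) = ln W + W" using Wc(1) by (simp add: ln_mult)
      moreover have "ln ((1 + S) * exp 1) = ln (1 + S) + 1" using Spos by (simp add: ln_mult)
      ultimately show ?thesis by simp
    qed
    moreover have "ln um = ln (1 + S) - ln W" unfolding um_def using Wc Spos by (simp add: ln_div)
    moreover have "(1 + S) / um = W" unfolding um_def using Wc Spos by simp
    ultimately show ?thesis by linarith
  qed
  have ln2: "ln (2::real) > 0" by simp
  define c where "c = B_W / ln 2"
  have cpos: "c > 0" using assms(7) ln2 c_def by simp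
  have f_eq: "\<And>z. f z = c * ((1 - z) * ln (1 + z * S))"
    unfolding f_def c_def log_def by simp
  have P4: "\<forall>z\<in>{0..1}. f z \<le> f zm"
  proof
    fix z :: real assume z: "z \<in> {0..1}"
    define u where "u = 1 + z * S"
    have u1: "u \<ge> 1" using z Spos u_def by simp
    have omz: "1 - z = (1 + S - u) / S" using Spos u_def by (simp add: field_simps)
    have omzm: "1 - zm = (1 + S - um) / S" using Spos zm_um by (auto simp add: field_simps)
    have "z * S \<le> 1 * S" using z Spos by (intro mult_right_mono) auto
    then have nn: "1 + S - u \<ge> 0" using u_def by simp
    have "ln (u / um) \<le> u / um - 1" using u1 um1 by (intro ln_le_minus_one) auto
    then have lnu: "ln u \<le> ln um + u / um - 1" using u1 um1 by (simp add: ln_div)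
    have "(1 - z) * ln u \<le> (1 + S - u) / S * (ln um + u / um - 1)"
      unfolding omz using nn Spos lnu by (intro mult_left_mono) auto
    also have "\<dots> = (1 + S - u) * (1 + S + u - 2 * um) / (S * um)"
      unfolding lnum using um1 Spos by (simp add: field_simps)
    also have "\<dots> \<le> (1 + S - um) * (1 + S - um) / (S * um)"
    proof (rule divide_right_mono)
      have "(1 + S - um) * (1 + S - um) - (1 + S - u) * (1 + S + u - 2 * um) = (u - um)^2"
        by (simp add: power2_eq_square algebra_simps)
      then show "(1 + S - u) * (1 + S + u - 2 * um) \<le> (1 + S - um) * (1 + S - um)"
        using zero_le_power2[of "u - um"] by linarith
      show "0 \<le> S * um" using Spos um1 by simp
    qed
    also have "\<dots> = (1 - zm) * ln um"
      unfolding omzm lnum using um1 Spos by (simp add: field_simps)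
    finally have "(1 - z) * ln (1 + z * S) \<le> (1 - zm) * ln (1 + zm * S)"
      using u_def zm_um by simp
    then show "f z \<le> f zm" unfolding f_eq using cpos by (simp add: mult_left_mono)
  qed
  have P2: "concave_on {0..1} f"
  proof -
    define h' where "h' = (\<lambda>x::real. c * (ln (1 + x * S) - (1 - x) * S / (1 + x * S)))"
    define h'' where "h'' = (\<lambda>x::real. c * (S / (1 + x * S) + S * (1 + S) / (1 + x * S)^2))"
    have pos: "\<And>x. x \<in> {0..1::real} \<Longrightarrow> 1 + x * S > 0" using Spos by (simp add: add_pos_nonneg)
    have "convex_on {0..1} (\<lambda>x. - f x)"
    proof (rule f''_ge0_imp_convex[where f' = h' and f'' = h''])
      show "convex {0..1::real}" by simp
      fix x :: real assume x: "x \<in> {0..1}"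
      have px: "1 + x * S > 0" using pos[OF x] .
      show "DERIV (\<lambda>x. - f x) x :> h' x"
        unfolding f_eq h'_def by (rule d1[OF px])
      show "DERIV h' x :> h'' x"
        unfolding h'_def h''_def by (rule d2[OF px])
      show "h'' x \<ge> 0" unfolding h''_def using px Spos cpos by simp
    qed
    then show ?thesis by (simp add: concave_on_def)
  qed
  show ?thesis unfolding Let_def
    using P1 P2 P3 P4 unfolding f_def zm_def W_def S_def by blast
qed

end
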